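(* For all integers $m\ge 2$, $r\ge 2$ and $i\in\{1,\ldots,r\}$ we have $\mu(mi,r)\mid \alpha_{m,r}(i)$. In particular, $\mu(m,r)\mid\alpha_{m,r}(i)$ for all $i\in\{1,\ldots,r\}$.
   Context: For positive integers $a,b$, $\mu(a,b):=\dfrac{a}{\gcd(a,b)}$. For integers $m\ge2$, $r\ge1$, the numbers $\alpha_{m,r}(1),\ldots,\alpha_{m,r}(r)$ are the unique integers such that $\binom{mn+r-1}{r}=\sum_{i=1}^{r}\alpha_{m,r}(i)\binom{n+i-1}{i}$ for all positive integers $n$. *)

theory Defs
  imports Main
begin

definition mu :: "nat \<Rightarrow> nat \<Rightarrow> nat" where
  "mu a b = a div gcd a b"

definition alpha :: "nat \<Rightarrow> nat \<Rightarrow> nat \<Rightarrow> int" where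
  "alpha m r = (THE a :: nat \<Rightarrow> int.
      (\<forall>i. (i < 1 \<or> r < i) \<longrightarrow> a i = 0) \<and>
      (\<forall>n::nat. 0 < n \<longrightarrow>
         int ((m * n + r - 1) choose r) = (\<Sum>i=1..r. a i * int ((n + i - 1) choose i))))"

end

theory Submission
  imports Defs "HOL-Computational_Algebra.Formal_Power_Series"
begin

notation fps_nth (infixl \<open>\<section>\<close> 75)

definition GG :: "nat \<Rightarrow> int fps" where
  "GG k = Abs_fps (\<lambda>i. int ((k + i - 1) choose i))"

lemma GG0: "GG 0 = 1"
  unfolding GG_def fps_eq_iff by (auto simp: fps_one_nth)

lemma GG_step: "GG (Suc k) * (1 - fps_X) = GG k"
proof (subst fps_eq_iff, intro allI)
  fix n
  have e: "GG (Suc k) * (1 - fps_X) = GG (Suc k) - fps_X * GG (Suc k)"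
    by (simp add: algebra_simps)
  show "(GG (Suc k) * (1 - fps_X))  \<section> n = GG k  \<section> n"
  proof (cases n)
    case 0 then show ?thesis unfolding e by (simp add: GG_def)
  next
    case (Suc j)
    have "((Suc k + Suc j - 1) choose (Suc j)) = ((k + j) choose j) + ((k + j) choose (Suc j))"
      by simp
    moreover have "Suc k + j - 1 = k + j" "k + Suc j - 1 = k + j" by auto
    ultimately show ?thesis unfolding e using Suc by (simp add: GG_def)
  qed
qed

lemma GG_inv: "GG k * (1 - fps_X) ^ k = 1"
proof (induction k)
  case 0 then show ?case by (simp add: GG0)
next
  case (Suc k)
  have "GG (Suc k) * (1 - fps_X) ^ Suc k = (GG (Suc k) * (1 - fps_X)) * (1 - fps_X) ^ k"
    by (simp add: algebra_simps)
  then show ?case using Suc GG_step by simp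
qed

definition ss :: "nat \<Rightarrow> int fps" where
  "ss m = 1 - (1 - fps_X) ^ m"

lemma ss0: "ss m  \<section> 0 = 0"
  unfolding ss_def by (simp add: fps_power_zeroth)

lemma GG_comp: "GG n oo ss m = GG (m * n)"
proof -
  have c: "(1 - fps_X) oo ss m = (1 - fps_X) ^ m"
    using ss0[of m] by (simp add: fps_compose_sub_distrib ss_def)
  have "(GG n oo ss m) * (1 - fps_X) ^ (m * n) = (GG n oo ss m) * ((1 - fps_X) ^ m) ^ n"
    by (simp add: power_mult)
  also have "\<dots> = (GG n oo ss m) * ((1 - fps_X) ^ n oo ss m)"
    using c fps_compose_power[OF ss0] by metis
  also have "\<dots> = (GG n * (1 - fps_X) ^ n) oo ss m"
    using fps_compose_mult_distrib[OF ss0] by metis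
  also have "\<dots> = 1" by (simp add: GG_inv)
  finally have h: "(GG n oo ss m) * (1 - fps_X) ^ (m * n) = 1" .
  have "GG (m * n) = GG (m * n) * ((GG n oo ss m) * (1 - fps_X) ^ (m * n))"
    using h by simp
  also have "\<dots> = (GG n oo ss m) * (GG (m * n) * (1 - fps_X) ^ (m * n))"
    by (simp add: algebra_simps)
  also have "\<dots> = GG n oo ss m" by (simp add: GG_inv)
  finally show ?thesis by simp
qed

definition AA :: "nat \<Rightarrow> nat \<Rightarrow> nat \<Rightarrow> int" where
  "AA m r i = (if 1 \<le> i \<and> i \<le> r then (ss m ^ i)  \<section> r else 0)"

lemma AA_ident:
  assumes "r \<ge> 1" "n > 0"
  shows "int ((m * n + r - 1) choose r) = (\<Sum>i=1..r. AA m r i * int ((n + i - 1) choose i))"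
proof -
  have "int ((m * n + r - 1) choose r) = GG (m * n)  \<section> r" by (simp add: GG_def)
  also have "\<dots> = (GG n oo ss m)  \<section> r" by (simp add: GG_comp)
  also have "\<dots> = (\<Sum>i=0..r. GG n  \<section> i * (ss m ^ i)  \<section> r)" by (simp add: fps_compose_nth)
  also have "\<dots> = GG n  \<section> 0 * (ss m ^ 0)  \<section> r + (\<Sum>i=1..r. GG n  \<section> i * (ss m ^ i)  \<section> r)"
    using assms(1) sum.atLeast_Suc_atMost[of 0 r "\<lambda>i. GG n \<section> i * (ss m ^ i) \<section> r"] by simp
  also have "\<dots> = (\<Sum>i=1..r. GG n \<section> i * (ss m ^ i) \<section> r)"
    using assms(1) by simp
  also have "\<dots> = (\<Sum>i=1..r. AA m r i * int ((n + i - 1) choose i))"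
    using assms(1) by (intro sum.cong) (auto simp: AA_def GG_def)
  finally show ?thesis .
qed

lemma uniq:
  fixes d :: "nat \<Rightarrow> int"
  assumes "\<forall>n\<ge>N. (\<Sum>i=0..r. d i * int ((n + i) choose i)) = 0"
  shows "\<forall>i\<le>r. d i = 0"
  using assms
proof (induction r arbitrary: d N)
  case 0 then show ?case by auto
next
  case (Suc r)
  let ?S = "\<lambda>n. (\<Sum>i=0..Suc r. d i * int ((n + i) choose i))"
  have diff: "?S (Suc n) - ?S n = (\<Sum>k=0..r. d (Suc k) * int ((Suc n + k) choose k))" for n
  proof -
    have "?S (Suc n) - ?S n = (\<Sum>i=0..Suc r. d i * (int ((Suc n + i) choose i) - int ((n + i) choose i)))"
      by (simp only: sum_subtractf right_diff_distrib)
    also have "\<dots> = (\<Sum>k=0..r. d (Suc k) * (int ((Suc n + Suc k) choose Suc k) - int ((n + Suc k) choose Suc k)))"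
      by (subst sum.atLeast0_atMost_Suc_shift) simp
    also have "\<dots> = (\<Sum>k=0..r. d (Suc k) * int ((Suc n + k) choose k))"
      by (intro sum.cong) auto
    finally show ?thesis .
  qed
  have "\<forall>n\<ge>Suc N. (\<Sum>k=0..r. d (Suc k) * int ((n + k) choose k)) = 0"
  proof (intro allI impI)
    fix n assume "n \<ge> Suc N"
    then obtain n' where n': "n = Suc n'" "n' \<ge> N" by (cases n) auto
    show "(\<Sum>k=0..r. d (Suc k) * int ((n + k) choose k)) = 0"
    proof -
      have pr: "\<And>n. n \<ge> N \<Longrightarrow> ?S n = 0" using Suc.prems by blast
      have a: "?S (Suc n') = 0" "?S n' = 0" using n'(2) by (intro pr; simp)+
      have "(\<Sum>k=0..r. d (Suc k) * int ((Suc n' + k) choose k)) = 0"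
        using diff[of n'] a by linarith
      then show ?thesis using n' by simp
    qed
  qed
  from Suc.IH[OF this] have h: "\<forall>k\<le>r. d (Suc k) = 0" .
  have "?S N = d 0 + (\<Sum>k=0..r. d (Suc k) * int ((N + Suc k) choose Suc k))"
    by (subst sum.atLeast0_atMost_Suc_shift) simp
  also have "\<dots> = d 0" using h by simp
  finally have "d 0 = 0" using Suc.prems by simp
  then show ?case using h by (metis not0_implies_Suc Suc_le_mono)
qed

lemma alpha_eq:
  assumes "r \<ge> 1"
  shows "alpha m r = AA m r"
  unfolding alpha_def
proof (rule the_equality)
  show "(\<forall>i. (i < 1 \<or> r < i) \<longrightarrow> AA m r i = 0) \<and>
      (\<forall>n::nat. 0 < n \<longrightarrow>
         int ((m * n + r - 1) choose r) = (\<Sum>i=1..r. AA m r i * int ((n + i - 1) choose i)))"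
    using AA_ident[OF assms] by (auto simp: AA_def)
next
  fix a :: "nat \<Rightarrow> int"
  assume H: "(\<forall>i. (i < 1 \<or> r < i) \<longrightarrow> a i = 0) \<and>
      (\<forall>n::nat. 0 < n \<longrightarrow>
         int ((m * n + r - 1) choose r) = (\<Sum>i=1..r. a i * int ((n + i - 1) choose i)))"
  define d where "d i = a i - AA m r i" for i
  have "\<forall>n\<ge>0. (\<Sum>i=0..r. d i * int ((n + i) choose i)) = 0"
  proof (intro allI impI)
    fix n :: nat
    have e1: "int ((m * Suc n + r - 1) choose r) = (\<Sum>i=1..r. a i * int ((n + i) choose i))"
      using H by auto
    have e2: "int ((m * Suc n + r - 1) choose r) = (\<Sum>i=1..r. AA m r i * int ((n + i) choose i))"
      using AA_ident[OF assms, of "Suc n" m] by simp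
    have d0: "d 0 = 0" using H by (simp add: d_def AA_def)
    have "(\<Sum>i=0..r. d i * int ((n + i) choose i)) = d 0 + (\<Sum>i=1..r. d i * int ((n + i) choose i))"
      using assms by (simp add: sum.atLeast_Suc_atMost)
    also have "\<dots> = (\<Sum>i=1..r. a i * int ((n + i) choose i)) - (\<Sum>i=1..r. AA m r i * int ((n + i) choose i))"
      using d0 by (simp add: d_def sum_subtractf[symmetric] algebra_simps)
    finally show "(\<Sum>i=0..r. d i * int ((n + i) choose i)) = 0" using e1 e2 by simp
  qed
  from uniq[OF this] have "\<forall>i\<le>r. d i = 0" .
  then show "a = AA m r"
    using H by (auto simp: d_def AA_def fun_eq_iff)
qed

lemma dvd_lemma:
  fixes a b :: nat and x :: int
  assumes "int a dvd int b * x" "a > 0"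
  shows "int (a div gcd a b) dvd x"
proof -
  define g where "g = gcd a b"
  define a' where "a' = a div g"
  define b' where "b' = b div g"
  have g0: "g > 0" using assms(2) g_def by simp
  have ea: "a = g * a'" unfolding a'_def g_def by simp
  have eb: "b = g * b'" unfolding b'_def g_def by simp
  have cop: "coprime a' b'" unfolding a'_def b'_def g_def
    using assms(2) div_gcd_coprime by blast
  have "int g * int a' dvd int g * (int b' * x)"
    using assms(1) ea eb by (simp add: mult.assoc)
  then have "int a' dvd int b' * x" using g0 by (simp add: dvd_mult_cancel_left)
  moreover have "coprime (int a') (int b')" using cop by simp
  ultimately have "int a' dvd x" by (simp add: coprime_dvd_mult_right_iff)
  then show ?thesis unfolding a'_def g_def by simp
qed

lemma deriv_ss: "fps_deriv (ss m) = fps_const (int m) * (1 - fps_X) ^ (m - 1)"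
  unfolding ss_def by (simp add: fps_deriv_power fps_of_nat)

lemma key_dvd:
  assumes "r \<ge> 1"
  shows "int (m * i) dvd int r * (ss m ^ i)  \<section> r"
proof -
  have "int r * (ss m ^ i)  \<section> r = fps_deriv (ss m ^ i)  \<section> (r - 1)"
    using assms by simp
  also have "fps_deriv (ss m ^ i) = fps_const (int (m * i)) * ((1 - fps_X) ^ (m - 1) * ss m ^ (i - 1))"
    by (simp add: fps_deriv_power deriv_ss fps_of_nat algebra_simps fps_const_mult[symmetric])
  finally show ?thesis by simp
qed

theorem lemma2p6:
  fixes m r :: nat
  assumes "m \<ge> 2" and "r \<ge> 2"
  shows "\<forall>i\<in>{1..r}. int (mu (m * i) r) dvd alpha m r i \<and> int (mu m r) dvd alpha m r i"
proof
  fix i assume i: "i \<in> {1..r}"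
  have r1: "r \<ge> 1" using assms by simp
  have A: "alpha m r i = (ss m ^ i)  \<section> r" using alpha_eq[OF r1] i by (simp add: AA_def)
  have mi: "m * i > 0" "m > 0" using assms i by auto
  have k: "int (m * i) dvd int r * alpha m r i" using key_dvd[OF r1] A by simp
  have k2: "int m dvd int r * alpha m r i"
    using k by (metis dvd_mult_left of_nat_mult)
  show "int (mu (m * i) r) dvd alpha m r i \<and> int (mu m r) dvd alpha m r i"
    unfolding mu_def using dvd_lemma[OF k] dvd_lemma[OF k2] mi by simp
qed

end
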